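(* Let $\mathbf L\in\mathbb R_+^{n\times k}$. Then $\mathrm{CCdim}(\mathbf L)\le\operatorname{rank}(\mathbf L)$.
   Context: Notation: $[m]=\{1,\dots,m\}$; $\Delta_n=\{\mathbf p\in\mathbb R_+^n:\sum_i p_i=1\}$. A loss matrix $\mathbf L\in\mathbb R_+^{n\times k}$ has columns $\boldsymbol\ell_t$, $t\in[k]$. Standing assumption: for each $t\in[k]$ there is $\mathbf p\in\Delta_n$ with $\operatorname{argmin}_{t'}\mathbf p^\top\boldsymbol\ell_{t'}=\{t\}$. A surrogate loss $\boldsymbol\psi:\mathcal C\to\mathbb R_+^n$ ($\mathcal C\subseteq\mathbb R^d$ convex) is $\mathbf L$-calibrated if there is $\mathrm{pred}:\mathcal C\to[k]$ such that for all $\mathbf p\in\Delta_n$: $\inf_{\mathbf u\in\mathcal C:\mathrm{pred}(\mathbf u)\notin\operatorname{argmin}_t\mathbf p^\top\boldsymbol\ell_t}\mathbf p^\top\boldsymbol\psi(\mathbf u)>\inf_{\mathbf u\in\mathcal C}\mathbf p^\top\boldsymbol\psi(\mathbf u)$. $\mathrm{CCdim}(\mathbf L)$ is the smallest $d\in\mathbb Z_+$ for which there exist a convex set $\mathcal C\subseteq\mathbb R^d$ and a convex (componentwise convex) $\mathbf L$-calibrated surrogate $\boldsymbol\psi:\mathcal C\to\mathbb R_+^n$ ($\infty$ if none exists). *)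

theory Defs
  imports "HOL-Analysis.Analysis" "HOL-Library.Extended_Nat"
begin

text \<open>Loss matrix L :: real^'k^'n : rows indexed by outcomes ('n, size n),
  columns indexed by predictions ('k, size k). Column t is the loss vector ell_t.\<close>

definition prob_simplex :: "(real^'n::finite) set" where
  "prob_simplex = {p. (\<forall>i. 0 \<le> p $ i) \<and> (\<Sum>i\<in>UNIV. p $ i) = 1}"

definition nonneg_loss_matrix :: "real^'k::finite^'n::finite \<Rightarrow> bool" where
  "nonneg_loss_matrix L \<longleftrightarrow> (\<forall>i t. 0 \<le> L $ i $ t)"

definition opt_set :: "real^'k::finite^'n::finite \<Rightarrow> real^'n \<Rightarrow> 'k set" where
  "opt_set L p = {t. \<forall>t'. p \<bullet> column t L \<le> p \<bullet> column t' L}"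

definition standing_assumption :: "real^'k::finite^'n::finite \<Rightarrow> bool" where
  "standing_assumption L \<longleftrightarrow> (\<forall>t. \<exists>p\<in>prob_simplex. opt_set L p = {t})"

text \<open>R^d, represented as functions nat => real vanishing from index d on.\<close>
definition Rd :: "nat \<Rightarrow> (nat \<Rightarrow> real) set" where
  "Rd d = {u. \<forall>i\<ge>d. u i = 0}"

definition convex_fset :: "(nat \<Rightarrow> real) set \<Rightarrow> bool" where
  "convex_fset C \<longleftrightarrow> (\<forall>u\<in>C. \<forall>v\<in>C. \<forall>a::real. 0 \<le> a \<and> a \<le> 1 \<longrightarrow>
      (\<lambda>i. a * u i + (1 - a) * v i) \<in> C)"

definition convex_fun_on :: "(nat \<Rightarrow> real) set \<Rightarrow> ((nat \<Rightarrow> real) \<Rightarrow> real) \<Rightarrow> bool" where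
  "convex_fun_on C f \<longleftrightarrow> (\<forall>u\<in>C. \<forall>v\<in>C. \<forall>a::real. 0 \<le> a \<and> a \<le> 1 \<longrightarrow>
      f (\<lambda>i. a * u i + (1 - a) * v i) \<le> a * f u + (1 - a) * f v)"

text \<open>L-calibration of psi : C -> R_+^n (infima taken in the extended reals,
  so an infimum over the empty set is +infinity).\<close>
definition calibrated ::
  "real^'k::finite^'n::finite \<Rightarrow> (nat \<Rightarrow> real) set \<Rightarrow> ((nat \<Rightarrow> real) \<Rightarrow> real^'n) \<Rightarrow> bool" where
  "calibrated L C psi \<longleftrightarrow> (\<exists>pred :: (nat \<Rightarrow> real) \<Rightarrow> 'k. \<forall>p\<in>prob_simplex.
      (INF u\<in>{u\<in>C. pred u \<notin> opt_set L p}. ereal (p \<bullet> psi u))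
        > (INF u\<in>C. ereal (p \<bullet> psi u)))"

definition convex_calibrated_surrogate ::
  "real^'k::finite^'n::finite \<Rightarrow> nat \<Rightarrow> (nat \<Rightarrow> real) set \<Rightarrow> ((nat \<Rightarrow> real) \<Rightarrow> real^'n) \<Rightarrow> bool" where
  "convex_calibrated_surrogate L d C psi \<longleftrightarrow>
     C \<subseteq> Rd d \<and> convex_fset C \<and>
     (\<forall>u\<in>C. \<forall>y. 0 \<le> psi u $ y) \<and>
     (\<forall>y. convex_fun_on C (\<lambda>u. psi u $ y)) \<and>
     calibrated L C psi"

definition CCdim :: "real^'k::finite^'n::finite \<Rightarrow> enat" where
  "CCdim L = (INF d\<in>{d. \<exists>C psi. convex_calibrated_surrogate L d C psi}. enat d)"

end

theory Submission imports Defs begin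
lemma ex_min_fin: "\<exists>t::'k::finite. \<forall>t'. f t \<le> (f t' :: real)"
proof -
  have "Min (range f) \<in> range f" by (rule Min_in) auto
  then obtain t where "f t = Min (range f)" by (metis imageE)
  moreover have "\<And>t'. Min (range f) \<le> f t'" by (rule Min_le) auto
  ultimately show ?thesis by metis
qed

lemma sq_id:
  fixes p b :: "real^'n::finite"
  assumes "(\<Sum>y\<in>UNIV. p$y) = 1"
  shows "(\<Sum>y\<in>UNIV. p$y*(x - b$y)^2) = (x - p\<bullet>b)^2 + (\<Sum>y\<in>UNIV. p$y*(p\<bullet>b - b$y)^2)"
proof -
  let ?m = "p\<bullet>b"
  have e: "\<And>y. p$y*(x - b$y)^2 = (x-?m)^2 * p$y + 2*(x-?m)*(?m * p$y - p$y*b$y) + p$y*(?m - b$y)^2"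
    by (simp add: power2_eq_square algebra_simps)
  have "(\<Sum>y\<in>UNIV. p$y*(x - b$y)^2) = (x-?m)^2 * (\<Sum>y\<in>UNIV. p$y) + 2*(x-?m)*(?m * (\<Sum>y\<in>UNIV. p$y) - (\<Sum>y\<in>UNIV. p$y*b$y)) + (\<Sum>y\<in>UNIV. p$y*(?m - b$y)^2)"
    unfolding e by (simp add: sum.distrib sum_distrib_left[symmetric] sum_subtractf right_diff_distrib)
  also have "(\<Sum>y\<in>UNIV. p$y*b$y) = ?m" by (simp add: inner_vec_def)
  finally show ?thesis using assms by simp
qed

lemma conv_sq: "0 \<le> (a::real) \<Longrightarrow> a \<le> 1 \<Longrightarrow> (a*x + (1-a)*y - c)^2 \<le> a*(x-c)^2 + (1-a)*(y-c)^2"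
proof -
  assume "0 \<le> a" "a \<le> 1"
  have "a*(x-c)^2 + (1-a)*(y-c)^2 - (a*x + (1-a)*y - c)^2 = a*(1-a)*(x-y)^2"
    by (simp add: power2_eq_square algebra_simps)
  moreover have "0 \<le> a*(1-a)*(x-y)^2" using \<open>0\<le>a\<close> \<open>a\<le>1\<close> by simp
  ultimately show ?thesis by linarith
qed

lemma basis_cols:
  fixes L :: "real^'k::finite^'n::finite"
  obtains b :: "nat \<Rightarrow> real^'n" and cc :: "'k \<Rightarrow> nat \<Rightarrow> real"
  where "\<And>t. column t L = (\<Sum>j<rank L. cc t j *\<^sub>R b j)"
proof -
  obtain B where B: "B \<subseteq> columns L" "independent B" "columns L \<subseteq> span B" "card B = dim (columns L)"
    by (rule basis_exists)
  have fB: "finite B" using B(2) independent_bound by blast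
  obtain e where e: "bij_betw e {0..<card B} B" using ex_bij_betw_nat_finite[OF fB] by blast
  have "\<forall>t. \<exists>c. column t L = (\<Sum>v\<in>B. c v *\<^sub>R v)"
  proof
    fix t
    have "column t L \<in> span B" using B(3) by (auto simp: columns_def)
    then show "\<exists>c. column t L = (\<Sum>v\<in>B. c v *\<^sub>R v)" using span_finite[OF fB] by auto
  qed
  then obtain c where c: "\<And>t. column t L = (\<Sum>v\<in>B. c t v *\<^sub>R v)" by metis
  have "\<And>t. column t L = (\<Sum>j<rank L. c t (e j) *\<^sub>R e j)"
  proof -
    fix t
    have "(\<Sum>v\<in>B. c t v *\<^sub>R v) = (\<Sum>j\<in>{0..<card B}. c t (e j) *\<^sub>R e j)"
      using sum.reindex_bij_betw[OF e, of "\<lambda>v. c t v *\<^sub>R v"] by simp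
    then show "column t L = (\<Sum>j<rank L. c t (e j) *\<^sub>R e j)"
      using c B(4) column_rank_def[of L] by (simp add: atLeast0LessThan)
  qed
  then show ?thesis using that[of "\<lambda>t j. c t (e j)" e] by blast
qed
theorem mainTheorem9:
  fixes L :: "real^'k::finite^'n::finite"
  assumes "nonneg_loss_matrix L"
    and "standing_assumption L"
  shows "CCdim L \<le> enat (rank L)"
proof -
  define r where "r = rank L"
  obtain b :: "nat \<Rightarrow> real^'n" and cc :: "'k \<Rightarrow> nat \<Rightarrow> real"
    where bc: "\<And>t. column t L = (\<Sum>j<r. cc t j *\<^sub>R b j)"
    using basis_cols[of L] unfolding r_def by blast
  define psi :: "(nat \<Rightarrow> real) \<Rightarrow> real^'n" where
    "psi u = (\<chi> y. \<Sum>j<r. (u j - b j $ y)^2)" for u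
  define score where "score u t = (\<Sum>j<r. u j * cc t j)" for u :: "nat \<Rightarrow> real" and t
  define pred where "pred u = (SOME t. \<forall>t'. score u t \<le> score u t')" for u
  have pred: "score u (pred u) \<le> score u t'" for u t'
    unfolding pred_def using someI_ex[OF ex_min_fin[of "score u"]] by blast
  have pcol: "p \<bullet> column t L = (\<Sum>j<r. cc t j * (p \<bullet> b j))" for p t
    by (simp add: bc inner_sum_right)
  have psi_nonneg: "0 \<le> psi u $ y" for u y
    by (simp add: psi_def sum_nonneg)
  have cf: "convex_fun_on (Rd r) (\<lambda>u. psi u $ y)" for y
    unfolding convex_fun_on_def psi_def
  proof (intro ballI allI impI)
    fix u v and a :: real assume a: "0 \<le> a \<and> a \<le> 1"
    have "(\<Sum>j<r. (a * u j + (1 - a) * v j - b j $ y)^2) \<le> (\<Sum>j<r. a*(u j - b j $ y)^2 + (1-a)*(v j - b j $ y)^2)"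
      by (rule sum_mono) (use a conv_sq in auto)
    also have "\<dots> = a * (\<Sum>j<r. (u j - b j $ y)^2) + (1-a) * (\<Sum>j<r. (v j - b j $ y)^2)"
      by (simp add: sum.distrib sum_distrib_left)
    finally show "(\<chi> y. \<Sum>j<r. ((\<lambda>i. a * u i + (1 - a) * v i) j - b j $ y)\<^sup>2) $ y
       \<le> a * (\<chi> y. \<Sum>j<r. (u j - b j $ y)\<^sup>2) $ y + (1 - a) * (\<chi> y. \<Sum>j<r. (v j - b j $ y)\<^sup>2) $ y"
      by simp
  qed
  have convC: "convex_fset (Rd r)"
    unfolding convex_fset_def Rd_def by auto
  have cal: "calibrated L (Rd r) psi"
    unfolding calibrated_def
  proof (intro exI[of _ pred] ballI)
    fix p :: "real^'n" assume p: "p \<in> prob_simplex"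
    have ps1: "(\<Sum>y\<in>UNIV. p$y) = 1" using p by (simp add: prob_simplex_def)
    define m where "m j = (if j < r then p \<bullet> b j else 0)" for j
    define K where "K = (\<Sum>j<r. \<Sum>y\<in>UNIV. p$y*(p \<bullet> b j - b j$y)^2)"
    have mR: "m \<in> Rd r" by (simp add: Rd_def m_def)
    have ident: "p \<bullet> psi u = (\<Sum>j<r. (u j - m j)^2) + K" for u
    proof -
      have "p \<bullet> psi u = (\<Sum>y\<in>UNIV. p$y * (\<Sum>j<r. (u j - b j $ y)^2))"
        by (simp add: inner_vec_def psi_def)
      also have "\<dots> = (\<Sum>j<r. \<Sum>y\<in>UNIV. p$y * (u j - b j $ y)^2)"
        unfolding sum_distrib_left by (rule sum.swap)
      also have "\<dots> = (\<Sum>j<r. (u j - m j)^2 + (\<Sum>y\<in>UNIV. p$y*(p \<bullet> b j - b j$y)^2))"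
      proof (rule sum.cong)
        fix j assume "j \<in> {..<r}"
        then have "m j = p \<bullet> b j" by (simp add: m_def)
        then show "(\<Sum>y\<in>UNIV. p$y * (u j - b j $ y)^2) = (u j - m j)^2 + (\<Sum>y\<in>UNIV. p$y*(p \<bullet> b j - b j$y)^2)"
          using sq_id[OF ps1, of "u j" "b j"] by simp
      qed simp
      finally show ?thesis by (simp add: sum.distrib K_def)
    qed
    have scm: "score m t = p \<bullet> column t L" for t
      by (simp add: score_def pcol m_def mult.commute)
    define Op where "Op = opt_set L p"
    obtain t0 where t0: "\<And>t'. p \<bullet> column t0 L \<le> p \<bullet> column t' L"
      using ex_min_fin[of "\<lambda>t. p \<bullet> column t L"] by blast
    define gap where "gap t = score m t - score m t0" for t
    have gpos: "0 < gap t" if "t \<notin> Op" for t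
    proof -
      from that obtain t' where "\<not> p \<bullet> column t L \<le> p \<bullet> column t' L"
        by (auto simp: Op_def opt_set_def)
      then show ?thesis using t0[of t'] by (simp add: gap_def scm)
    qed
    define G where "G = gap ` (- Op) \<union> {1}"
    define g where "g = Min G"
    have fG: "finite G" "G \<noteq> {}" by (auto simp: G_def)
    have g0: "0 < g" unfolding g_def using fG gpos by (auto simp: Min_gr_iff G_def)
    have gle: "g \<le> gap t" if "t \<notin> Op" for t
      unfolding g_def using fG that by (intro Min_le) (auto simp: G_def)
    define M where "M = (\<Sum>t\<in>UNIV. \<Sum>t'\<in>UNIV. \<Sum>j<r. \<bar>cc t j - cc t' j\<bar>)"
    have Mb: "\<bar>cc t j - cc t' j\<bar> \<le> M" if "j < r" for t t' j
    proof -
      have "\<bar>cc t j - cc t' j\<bar> \<le> (\<Sum>j<r. \<bar>cc t j - cc t' j\<bar>)"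
        by (rule member_le_sum) (use that in auto)
      also have "\<dots> \<le> (\<Sum>t'\<in>UNIV. \<Sum>j<r. \<bar>cc t j - cc t' j\<bar>)"
        by (rule member_le_sum[of t' UNIV "\<lambda>t'. \<Sum>j<r. \<bar>cc t j - cc t' j\<bar>"]) (auto intro: sum_nonneg)
      also have "\<dots> \<le> M" unfolding M_def
        by (rule member_le_sum[of t UNIV]) (auto intro!: sum_nonneg)
      finally show ?thesis .
    qed
    have M0: "0 \<le> M" unfolding M_def by (auto intro!: sum_nonneg)
    define eta where "eta = g / (r * M + 1)"
    have den: "0 < real r * M + 1" using M0 by (simp add: add_nonneg_pos)
    have eta0: "0 < eta" unfolding eta_def using g0 den by simp
    have etag: "real r * eta * M < g"
    proof -
      have "eta * (real r * M + 1) = g" unfolding eta_def using den by simp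
      then show ?thesis using eta0 by (simp add: algebra_simps)
    qed
    have bad: "K + eta^2 \<le> p \<bullet> psi u" if "u \<in> Rd r" "pred u \<notin> Op" for u
    proof -
      define t where "t = pred u"
      have tO: "t \<notin> Op" using that t_def by simp
      have "\<exists>j<r. eta \<le> \<bar>u j - m j\<bar>"
      proof (rule ccontr)
        assume "\<not> ?thesis"
        then have sm: "\<bar>u j - m j\<bar> < eta" if "j < r" for j using that by force
        have "gap t \<le> (score m t - score m t0) - (score u t - score u t0)"
          using pred[of u t0] by (simp add: gap_def t_def)
        also have "\<dots> = (\<Sum>j<r. (m j - u j) * (cc t j - cc t0 j))"
          by (simp add: score_def sum_subtractf[symmetric] algebra_simps)
        also have "\<dots> \<le> (\<Sum>j<r. eta * M)"
        proof (rule sum_mono)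
          fix j assume j: "j \<in> {..<r}"
          have "(m j - u j) * (cc t j - cc t0 j) \<le> \<bar>m j - u j\<bar> * \<bar>cc t j - cc t0 j\<bar>"
            by (metis abs_ge_self abs_mult)
          also have "\<dots> \<le> eta * M"
            using sm[of j] Mb[of j t t0] j by (intro mult_mono) (auto simp: abs_minus_commute)
          finally show "(m j - u j) * (cc t j - cc t0 j) \<le> eta * M" .
        qed
        also have "\<dots> = real r * eta * M" by simp
        finally show False using etag gle[OF tO] by linarith
      qed
      then obtain j where j: "j < r" "eta \<le> \<bar>u j - m j\<bar>" by blast
      have "eta^2 \<le> (u j - m j)^2"
        using j eta0 by (metis abs_le_square_iff abs_of_pos less_imp_le)
      also have "\<dots> \<le> (\<Sum>j<r. (u j - m j)^2)"
        by (rule member_le_sum) (use j in auto)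
      finally show ?thesis using ident[of u] by simp
    qed
    have "(INF u\<in>Rd r. ereal (p \<bullet> psi u)) \<le> ereal K"
      using INF_lower[OF mR, of "\<lambda>u. ereal (p \<bullet> psi u)"] ident[of m] by simp
    also have "ereal K < ereal (K + eta^2)" using eta0 by simp
    also have "ereal (K + eta^2) \<le> (INF u\<in>{u\<in>Rd r. pred u \<notin> opt_set L p}. ereal (p \<bullet> psi u))"
      by (rule INF_greatest) (use bad Op_def in auto)
    finally show "(INF u\<in>{u\<in>Rd r. pred u \<notin> opt_set L p}. ereal (p \<bullet> psi u)) > (INF u\<in>Rd r. ereal (p \<bullet> psi u))" .
  qed
  have "convex_calibrated_surrogate L r (Rd r) psi"
    unfolding convex_calibrated_surrogate_def using convC cf cal psi_nonneg by auto
  then show ?thesis unfolding CCdim_def r_def[symmetric]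
    by (intro INF_lower2[of r]) auto
qed
end
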